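(* Assume (A1), (A2), (B)$_T$ for every $T>0$, (C1), (C2) and (C3). Let $x\in E$, $\varepsilon>0$, and let $\sigma$ be an $\varepsilon$-optimal stopping time for $w(x)$. Then \[ \mathbb{E}^x\{\sigma\}\le\frac{\gamma(x)+\mathbb{E}^x\{\zeta^+\}-w(x)+\varepsilon}{-d(x)}. \]
   Context: Let $(E,\rho)$ be a locally compact metric space with Borel $\sigma$-field, and let $(X_t)_{t\ge0}$ be a Feller–Markov process with right-continuous paths on a filtered space $(\Omega,\mathcal F,(\mathcal F_t))$, taking values in $E$; $\mathbb{P}^x$ denotes the law of the process started at $x$ and $\mathbb{E}^x$ the corresponding expectation. Stopping times are with respect to $(\mathcal F_t)$ and may take the value $+\infty$. Write $P_t(x,\cdot)=\mathbb{P}^x\{X_t\in\cdot\}$, $P_t\phi(x)=\mathbb{E}^x\{\phi(X_t)\}$. (A1) $P_t\,\mathcal C_0\subseteq\mathcal C_0$ for all $t\ge0$, where $\mathcal C_0$ is the space of continuous bounded functions $E\to\mathbb R$ vanishing at infinity. (A2) There are a unique probability measure $\mu$ on $E$, a function $K:E\to(0,\infty)$ bounded on compacts and $h:[0,\infty)\to\mathbb R_+$ with $\int_0^\infty h<\infty$ such that $\|P_t(x,\cdot)-\mu\|_{TV}\le K(x)h(t)$ for all $x,t$; furthermore $\mathbb{E}^x\{K(X_T)\}<\infty$ for each $T\ge0$. Let $f:E\to\mathbb R$ be continuous and bounded and $g:E\to\mathbb R$ continuous (possibly unbounded). (B)$_T$: for every $x\in E$ there is a compact ball $\bar B(x,\delta)$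 such that $\zeta_T=\sup_{t\in[0,T]}|g(X_t)|$ satisfies $\lim_{n\to\infty}\sup_{y\in\bar B(x,\delta)}\mathbb{E}^y\{\zeta_T\mathbf 1_{\{\zeta_T>n\}}\}=0$. (C1) $\zeta^+:=\sup_{t\ge0}g^+(X_t)$ is $\mathbb{P}^x$-integrable for every $x$. (C2) For every $x$ and events $A_T\in\mathcal F_T$: if $\lim_{T\to\infty}\mathbb{P}^x(A_T)=0$ then $\lim_{T\to\infty}\mathbb{E}^x\{\mathbf 1_{A_T}g^-(X_T)\}=0$. (C3) For every $x$ there is $d(x)<0$ with $\gamma(x):=\sup_\tau\liminf_{T\to\infty}\mathbb{E}^x\{\int_0^{\tau\wedge T}(f(X_s)-d(x))ds\}<\infty$. The value function is $w(x)=\sup_\tau\liminf_{T\to\infty}\mathbb{E}^x\{\int_0^{\tau\wedge T}f(X_s)\,ds+g(X_{\tau\wedge T})\}$, supremum over all stopping times. A stopping time $\sigma$ is $\varepsilon$-optimal for $w(x)$ if $\liminf_{T\to\infty}\mathbb{E}^x\{\int_0^{\sigma\wedge T}f(X_s)ds+g(X_{\sigma\wedge T})\}\ge w(x)-\varepsilon$. *)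

theory Defs
  imports "HOL-Analysis.Analysis" "HOL-Probability.Probability"
begin

definition C0 :: "('e::metric_space \<Rightarrow> real) set" where
  "C0 = {\<phi>. continuous_on UNIV \<phi> \<and> bounded (range \<phi>) \<and>
            (\<forall>e>0. \<exists>C. compact C \<and> (\<forall>y. y \<notin> C \<longrightarrow> \<bar>\<phi> y\<bar> < e))}"

definition Ptr :: "('e \<Rightarrow> 'w measure) \<Rightarrow> (real \<Rightarrow> 'w \<Rightarrow> 'e) \<Rightarrow> real \<Rightarrow> ('e \<Rightarrow> real) \<Rightarrow> 'e \<Rightarrow> real" where
  "Ptr M X t \<phi> y = (\<integral>\<omega>. \<phi> (X t \<omega>) \<partial>M y)"

text \<open>Markov process with right-continuous paths on (Omega, F, (F_t)), laws P^x = M x.\<close>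
definition markov_process ::
  "'w measure \<Rightarrow> ('e::metric_space \<Rightarrow> 'w measure) \<Rightarrow> (real \<Rightarrow> 'w measure) \<Rightarrow> (real \<Rightarrow> 'w \<Rightarrow> 'e) \<Rightarrow> bool" where
  "markov_process \<Omega> M F X \<longleftrightarrow>
     (\<forall>x. prob_space (M x) \<and> sets (M x) = sets \<Omega>) \<and>
     (\<forall>t\<ge>0. subalgebra \<Omega> (F t)) \<and>
     (\<forall>s t. 0 \<le> s \<longrightarrow> s \<le> t \<longrightarrow> sets (F s) \<subseteq> sets (F t)) \<and>
     (\<forall>t\<ge>0. X t \<in> F t \<rightarrow>\<^sub>M borel) \<and>
     (\<forall>\<omega>\<in>space \<Omega>. \<forall>t\<ge>0. continuous (at_right t) (\<lambda>s. X s \<omega>)) \<and>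
     (\<forall>x. AE \<omega> in M x. X 0 \<omega> = x) \<and>
     (\<forall>t\<ge>0. \<forall>A\<in>sets borel.
         (\<lambda>x. measure (M x) {\<omega>\<in>space \<Omega>. X t \<omega> \<in> A}) \<in> borel_measurable borel) \<and>
     (\<forall>x. \<forall>s\<ge>0. \<forall>t\<ge>0. \<forall>\<phi>::'e \<Rightarrow> real. \<phi> \<in> borel_measurable borel \<longrightarrow> bounded (range \<phi>) \<longrightarrow>
         (AE \<omega> in M x. real_cond_exp (M x) (F t) (\<lambda>\<omega>. \<phi> (X (t + s) \<omega>)) \<omega>
                         = Ptr M X s \<phi> (X t \<omega>)))"

definition ext_stopping_time :: "(real \<Rightarrow> 'w measure) \<Rightarrow> ('w \<Rightarrow> ennreal) \<Rightarrow> bool" where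
  "ext_stopping_time F \<tau> \<longleftrightarrow>
     (\<forall>t\<ge>0. {\<omega>\<in>space (F t). \<tau> \<omega> \<le> ennreal t} \<in> sets (F t))"

definition stop_min :: "('w \<Rightarrow> ennreal) \<Rightarrow> real \<Rightarrow> 'w \<Rightarrow> real" where
  "stop_min \<tau> T \<omega> = enn2real (min (\<tau> \<omega>) (ennreal T))"

definition reward ::
  "('e \<Rightarrow> 'w measure) \<Rightarrow> (real \<Rightarrow> 'w \<Rightarrow> 'e) \<Rightarrow> ('e \<Rightarrow> real) \<Rightarrow> ('e \<Rightarrow> real) \<Rightarrow> 'e \<Rightarrow> ('w \<Rightarrow> ennreal) \<Rightarrow> ereal" where
  "reward M X f g x \<tau> =
     Liminf at_top (\<lambda>T. ereal (\<integral>\<omega>. integral {0..stop_min \<tau> T \<omega>} (\<lambda>s. f (X s \<omega>))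
                                      + g (X (stop_min \<tau> T \<omega>) \<omega>) \<partial>M x))"

definition value_fn ::
  "('e \<Rightarrow> 'w measure) \<Rightarrow> (real \<Rightarrow> 'w measure) \<Rightarrow> (real \<Rightarrow> 'w \<Rightarrow> 'e) \<Rightarrow> ('e \<Rightarrow> real) \<Rightarrow> ('e \<Rightarrow> real) \<Rightarrow> 'e \<Rightarrow> ereal" where
  "value_fn M F X f g x = (SUP \<tau>\<in>{\<tau>. ext_stopping_time F \<tau>}. reward M X f g x \<tau>)"

definition gamma_fn ::
  "('e \<Rightarrow> 'w measure) \<Rightarrow> (real \<Rightarrow> 'w measure) \<Rightarrow> (real \<Rightarrow> 'w \<Rightarrow> 'e) \<Rightarrow> ('e \<Rightarrow> real) \<Rightarrow> ('e \<Rightarrow> real) \<Rightarrow> 'e \<Rightarrow> ereal" where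
  "gamma_fn M F X f d x = value_fn M F X (\<lambda>y. f y - d x) (\<lambda>_. 0) x"

definition zetaT :: "('e \<Rightarrow> real) \<Rightarrow> (real \<Rightarrow> 'w \<Rightarrow> 'e) \<Rightarrow> real \<Rightarrow> 'w \<Rightarrow> ennreal" where
  "zetaT g X T \<omega> = (SUP t\<in>{0..T}. ennreal \<bar>g (X t \<omega>)\<bar>)"

definition zeta_plus :: "('e \<Rightarrow> real) \<Rightarrow> (real \<Rightarrow> 'w \<Rightarrow> 'e) \<Rightarrow> 'w \<Rightarrow> ennreal" where
  "zeta_plus g X \<omega> = (SUP t\<in>{0..}. ennreal (max 0 (g (X t \<omega>))))"

definition tv_dist :: "'e measure \<Rightarrow> 'e measure \<Rightarrow> real" where
  "tv_dist P Q = (SUP A\<in>sets P. \<bar>measure P A - measure Q A\<bar>)"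

end

theory Submission
  imports Defs
begin


lemma rc_comp:
  fixes X :: "real \<Rightarrow> 'w \<Rightarrow> 'e::metric_space"
  assumes Xm: "\<And>t. t \<ge> 0 \<Longrightarrow> X t \<in> borel_measurable N"
    and rc: "\<And>\<omega> t. \<omega> \<in> space N \<Longrightarrow> t \<ge> 0 \<Longrightarrow> continuous (at_right t) (\<lambda>s. X s \<omega>)"
    and r[measurable]: "r \<in> borel_measurable N" and rpos: "\<And>\<omega>. \<omega> \<in> space N \<Longrightarrow> r \<omega> \<ge> 0"
  shows "(\<lambda>\<omega>. X (r \<omega>) \<omega>) \<in> borel_measurable N"
proof -
  define q where "q n \<omega> = (real (nat \<lfloor>real (Suc n) * r \<omega>\<rfloor>) + 1) / real (Suc n)" for n \<omega>
  have m: "(\<lambda>\<omega>. X (q n \<omega>) \<omega>) \<in> borel_measurable N" for n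
  proof -
    have g: "(\<lambda>\<omega>. nat \<lfloor>real (Suc n) * r \<omega>\<rfloor>) \<in> N \<rightarrow>\<^sub>M count_space UNIV"
      by measurable
    have "(\<lambda>\<omega>. (\<lambda>k::nat. X ((real k + 1)/real (Suc n))) (nat \<lfloor>real (Suc n) * r \<omega>\<rfloor>) \<omega>) \<in> borel_measurable N"
      by (rule measurable_compose_countable[where f="\<lambda>k. X ((real k + 1)/real (Suc n))", OF _ g])
        (rule Xm, simp)
    then show ?thesis by (simp add: q_def)
  qed
  show ?thesis
  proof (rule borel_measurable_LIMSEQ_metric[OF m])
    fix \<omega> assume \<omega>: "\<omega> \<in> space N"
    have r0: "r \<omega> \<ge> 0" using rpos \<omega> .
    have bnd: "r \<omega> < q n \<omega> \<and> q n \<omega> \<le> r \<omega> + 1 / real (Suc n)" for n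
    proof -
      define m where "m = real (Suc n)"
      have m0: "m > 0" by (simp add: m_def)
      have fl: "real (nat \<lfloor>m * r \<omega>\<rfloor>) = of_int \<lfloor>m * r \<omega>\<rfloor>" using r0 m0 by simp
      have a: "of_int \<lfloor>m * r \<omega>\<rfloor> \<le> m * r \<omega>" "m * r \<omega> < of_int \<lfloor>m * r \<omega>\<rfloor> + 1"
        by linarith+
      have "q n \<omega> = (of_int \<lfloor>m * r \<omega>\<rfloor> + 1) / m" unfolding q_def m_def[symmetric] fl ..
      moreover have "r \<omega> < (of_int \<lfloor>m * r \<omega>\<rfloor> + 1) / m" using a m0 by (simp add: field_simps)
      moreover have "(of_int \<lfloor>m * r \<omega>\<rfloor> + 1) / m \<le> r \<omega> + 1 / m" using a m0 by (simp add: field_simps)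
      ultimately show ?thesis by (simp add: m_def)
    qed
    have lim1: "(\<lambda>n. r \<omega> + 1 / real (Suc n)) \<longlonglongrightarrow> r \<omega> + 0"
      by (intro tendsto_add tendsto_const LIMSEQ_Suc[OF lim_1_over_n])
    have "(\<lambda>n. q n \<omega>) \<longlonglongrightarrow> r \<omega>"
      by (rule tendsto_sandwich[OF _ _ tendsto_const lim1[simplified]]) (use bnd in \<open>auto intro!: always_eventually less_imp_le\<close>)
    then have fl: "filterlim (\<lambda>n. q n \<omega>) (at_right (r \<omega>)) sequentially"
      by (rule tendsto_imp_filterlim_at_right) (use bnd in \<open>auto intro!: always_eventually\<close>)
    have "((\<lambda>s. X s \<omega>) \<longlongrightarrow> X (r \<omega>) \<omega>) (at_right (r \<omega>))"
      using rc[OF \<omega> r0] by (simp add: continuous_within)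
    from filterlim_compose[OF this fl] show "(\<lambda>n. X (q n \<omega>) \<omega>) \<longlonglongrightarrow> X (r \<omega>) \<omega>" .
  qed
qed


lemma path_int:
  fixes X :: "real \<Rightarrow> 'w \<Rightarrow> 'e::metric_space" and f :: "'e \<Rightarrow> real"
  assumes Xm: "\<And>t. t \<ge> 0 \<Longrightarrow> X t \<in> borel_measurable N"
    and rc: "\<And>\<omega> t. \<omega> \<in> space N \<Longrightarrow> t \<ge> 0 \<Longrightarrow> continuous (at_right t) (\<lambda>s. X s \<omega>)"
    and r[measurable]: "r \<in> borel_measurable N"
    and fc: "continuous_on UNIV f" and fb: "\<And>y. \<bar>f y\<bar> \<le> Bf"
  shows "(\<lambda>\<omega>. integral {0..r \<omega>} (\<lambda>s. f (X s \<omega>))) \<in> borel_measurable N"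
    and "\<And>\<omega>. \<omega> \<in> space N \<Longrightarrow> (\<lambda>s. f (X s \<omega>)) integrable_on {0..r \<omega>}"
proof -
  have fm[measurable]: "f \<in> borel_measurable borel"
    using fc by (rule borel_measurable_continuous_onI)
  let ?P = "N \<Otimes>\<^sub>M (lborel :: real measure)"
  have J: "(\<lambda>p. X (max 0 (snd p)) (fst p)) \<in> borel_measurable ?P"
  proof (rule rc_comp[where X="\<lambda>t p. X t (fst p)" and r="\<lambda>p. max 0 (snd p)" and N="?P"])
    fix t :: real assume "t \<ge> 0"
    then show "(\<lambda>p. X t (fst p)) \<in> borel_measurable ?P"
      using Xm measurable_compose[OF measurable_fst] by blast
  next
    fix p t assume "p \<in> space ?P" "(t::real) \<ge> 0"
    then show "continuous (at_right t) (\<lambda>s. X s (fst p))"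
      using rc by (auto simp: space_pair_measure)
  qed auto
  have Jf[measurable]: "(\<lambda>p. f (X (max 0 (snd p)) (fst p))) \<in> borel_measurable ?P"
    using measurable_compose[OF J fm] by simp
  have pm: "(\<lambda>s. f (X (max 0 s) \<omega>)) \<in> borel_measurable lborel" if \<omega>: "\<omega> \<in> space N" for \<omega>
  proof -
    have "(\<lambda>s. X (max 0 s) \<omega>) \<in> borel_measurable lborel"
      by (rule rc_comp[where X="\<lambda>t s. X t \<omega>" and r="\<lambda>s. max 0 s"]) (use rc \<omega> in auto)
    from measurable_compose[OF this fm] show ?thesis .
  qed
  have si: "set_integrable lborel {0..r \<omega>} (\<lambda>s. f (X (max 0 s) \<omega>))" if \<omega>: "\<omega> \<in> space N" for \<omega>
    unfolding set_integrable_def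
    by (rule integrableI_bounded_set[where A="{0..r \<omega>}" and B=Bf])
       (use pm[OF \<omega>] fb in \<open>auto simp: indicator_def emeasure_lborel_Icc_eq\<close>)
  have eq: "integral {0..r \<omega>} (\<lambda>s. f (X s \<omega>)) = (\<integral>s. (if 0 \<le> s \<and> s \<le> r \<omega> then f (X (max 0 s) \<omega>) else 0) \<partial>lborel)"
    if \<omega>: "\<omega> \<in> space N" for \<omega>
  proof -
    have "integral {0..r \<omega>} (\<lambda>s. f (X s \<omega>)) = integral {0..r \<omega>} (\<lambda>s. f (X (max 0 s) \<omega>))"
      by (rule integral_cong) auto
    also have "\<dots> = (LINT s : {0..r \<omega>} | lborel. f (X (max 0 s) \<omega>))"
      using set_borel_integral_eq_integral(2)[OF si[OF \<omega>]] by simp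
    also have "\<dots> = (\<integral>s. (if 0 \<le> s \<and> s \<le> r \<omega> then f (X (max 0 s) \<omega>) else 0) \<partial>lborel)"
      unfolding set_lebesgue_integral_def by (rule Bochner_Integration.integral_cong) (auto simp: indicator_def)
    finally show ?thesis .
  qed
  have "(\<lambda>\<omega>. \<integral>s. (if 0 \<le> s \<and> s \<le> r \<omega> then f (X (max 0 s) \<omega>) else 0) \<partial>lborel) \<in> borel_measurable N"
    by (rule lborel.borel_measurable_lebesgue_integral) measurable
  then show "(\<lambda>\<omega>. integral {0..r \<omega>} (\<lambda>s. f (X s \<omega>))) \<in> borel_measurable N"
    by (rule measurable_cong[THEN iffD2, rotated]) (simp add: eq)
  fix \<omega> assume \<omega>: "\<omega> \<in> space N"
  have "(\<lambda>s. f (X (max 0 s) \<omega>)) integrable_on {0..r \<omega>}"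
    using set_borel_integral_eq_integral(1)[OF si[OF \<omega>]] .
  then show "(\<lambda>s. f (X s \<omega>)) integrable_on {0..r \<omega>}"
    by (rule integrable_spike_finite[where S="{}", rotated 2]) auto
qed


theorem mainTheorem12:
  fixes \<Omega> :: "'w measure" and M :: "'e::metric_space \<Rightarrow> 'w measure"
    and F :: "real \<Rightarrow> 'w measure" and X :: "real \<Rightarrow> 'w \<Rightarrow> 'e"
    and f g d :: "'e \<Rightarrow> real" and x :: 'e and \<epsilon> :: real and \<sigma> :: "'w \<Rightarrow> ennreal"
  assumes loc_compact: "locally_compact_space (euclidean :: 'e topology)"
    and markov: "markov_process \<Omega> M F X"
    and A1: "\<forall>t\<ge>0. \<forall>\<phi>\<in>C0. Ptr M X t \<phi> \<in> C0"
    and A2: "\<exists>\<mu> K h. prob_space \<mu> \<and> sets \<mu> = sets (borel :: 'e measure) \<and>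
              (\<forall>y. K y > 0) \<and> (\<forall>C. compact C \<longrightarrow> bounded (K ` C)) \<and>
              (\<forall>t\<ge>0. h t \<ge> 0) \<and> h integrable_on {0..} \<and>
              (\<forall>y. \<forall>t\<ge>0. tv_dist (distr (M y) borel (X t)) \<mu> \<le> K y * h t) \<and>
              (\<forall>y. \<forall>T\<ge>0. integrable (M y) (\<lambda>\<omega>. K (X T \<omega>)))"
    and f_cont: "continuous_on UNIV f" and f_bdd: "bounded (range f)"
    and g_cont: "continuous_on UNIV g"
    and B: "\<forall>T>0. \<forall>y. \<exists>\<delta>>0. compact (cball y \<delta>) \<and>
              (\<lambda>n. SUP z\<in>cball y \<delta>.
                   \<integral>\<^sup>+\<omega>. zetaT g X T \<omega> * indicator {\<omega>. zetaT g X T \<omega> > of_nat n} \<omega> \<partial>M z)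
              \<longlonglongrightarrow> 0"
    and C1: "\<forall>y. zeta_plus g X \<in> borel_measurable (M y) \<and>
              (\<integral>\<^sup>+\<omega>. zeta_plus g X \<omega> \<partial>M y) < \<infinity>"
    and C2: "\<forall>y. \<forall>A :: real \<Rightarrow> 'w set. (\<forall>T\<ge>0. A T \<in> sets (F T)) \<longrightarrow>
              ((\<lambda>T. measure (M y) (A T)) \<longlongrightarrow> 0) at_top \<longrightarrow>
              ((\<lambda>T. \<integral>\<^sup>+\<omega>. indicator (A T) \<omega> * ennreal (max 0 (- g (X T \<omega>))) \<partial>M y) \<longlongrightarrow> 0) at_top"
    and C3: "\<forall>y. d y < 0 \<and> gamma_fn M F X f d y < \<infinity>"
    and eps_pos: "\<epsilon> > 0"
    and sigma_st: "ext_stopping_time F \<sigma>"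
    and sigma_opt: "reward M X f g x \<sigma> \<ge> value_fn M F X f g x - ereal \<epsilon>"
  shows "enn2ereal (\<integral>\<^sup>+\<omega>. \<sigma> \<omega> \<partial>M x)
           \<le> (gamma_fn M F X f d x + enn2ereal (\<integral>\<^sup>+\<omega>. zeta_plus g X \<omega> \<partial>M x)
               - value_fn M F X f g x + ereal \<epsilon>) / ereal (- d x)"
proof -
  note mp = markov[unfolded markov_process_def]
  have m1: "\<forall>x. prob_space (M x) \<and> sets (M x) = sets \<Omega>" using mp by (rule conjunct1)
  have m2: "\<forall>t\<ge>0. subalgebra \<Omega> (F t)" using mp[THEN conjunct2] by (rule conjunct1)
  have m4: "\<forall>t\<ge>0. X t \<in> F t \<rightarrow>\<^sub>M borel" using mp[THEN conjunct2, THEN conjunct2, THEN conjunct2] by (rule conjunct1)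
  have m5: "\<forall>\<omega>\<in>space \<Omega>. \<forall>t\<ge>0. continuous (at_right t) (\<lambda>s. X s \<omega>)"
    using mp[THEN conjunct2, THEN conjunct2, THEN conjunct2, THEN conjunct2] by (rule conjunct1)
  interpret P: prob_space "M x" using m1 by simp
  have setsM: "sets (M x) = sets \<Omega>" using m1 by simp
  have spM: "space (M x) = space \<Omega>" using sets_eq_imp_space_eq[OF setsM] .
  have subalg: "\<And>t. t \<ge> 0 \<Longrightarrow> subalgebra \<Omega> (F t)" using m2 by simp
  have XmM: "X t \<in> borel_measurable (M x)" if "t \<ge> 0" for t
  proof -
    have "X t \<in> F t \<rightarrow>\<^sub>M borel" using m4 that by simp
    then have "X t \<in> borel_measurable \<Omega>" using measurable_from_subalg subalg[OF that] by blast
    then show ?thesis using measurable_cong_sets[OF setsM refl] by blast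
  qed
  have rcM: "continuous (at_right t) (\<lambda>s. X s \<omega>)" if "\<omega> \<in> space (M x)" "t \<ge> 0" for \<omega> t
    using m5 that spM by simp
  obtain Bf where Bf: "\<And>y. \<bar>f y\<bar> \<le> Bf"
    using f_bdd by (auto simp: bounded_iff)
  have gm[measurable]: "g \<in> borel_measurable borel"
    using g_cont by (rule borel_measurable_continuous_onI)
  define r where "r T \<omega> = stop_min \<sigma> T \<omega>" for T \<omega>
  have r_nn: "0 \<le> r T \<omega>" for T \<omega> by (simp add: r_def stop_min_def)
  have r_le: "r T \<omega> \<le> T" if "T \<ge> 0" for T \<omega>
    using that by (simp add: r_def stop_min_def enn2real_leI)
  have r_mono: "r T0 \<omega> \<le> r T \<omega>" if "0 \<le> T0" "T0 \<le> T" for T0 T \<omega>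
  proof -
    have "min (\<sigma> \<omega>) (ennreal T0) \<le> min (\<sigma> \<omega>) (ennreal T)" using that by (simp add: min.coboundedI1 min.coboundedI2 ennreal_leI)
    moreover have "min (\<sigma> \<omega>) (ennreal T) < top" by (simp add: min_less_iff_disj)
    ultimately show ?thesis unfolding r_def stop_min_def by (rule enn2real_mono)
  qed
  have r_meas[measurable]: "r T \<in> borel_measurable (M x)" if T0: "T \<ge> 0" for T
    unfolding borel_measurable_iff_le
  proof
    fix a :: real
    consider "a < 0" | "T \<le> a" | "0 \<le> a" "a < T" by linarith
    then show "{w \<in> space (M x). r T w \<le> a} \<in> sets (M x)"
    proof cases
      case 1
      then have "{w \<in> space (M x). r T w \<le> a} = {}" using r_nn by (auto simp: not_le intro: less_le_trans)
      then show ?thesis by (metis sets.empty_sets)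
    next
      case 2
      then have "{w \<in> space (M x). r T w \<le> a} = space (M x)" using r_le[OF T0] by (auto intro: order_trans)
      then show ?thesis by (metis sets.top)
    next
      case 3
      have eq: "r T w \<le> a \<longleftrightarrow> \<sigma> w \<le> ennreal a" for w
      proof (cases "\<sigma> w \<le> ennreal T")
        case True
        have lt: "\<sigma> w < top" using order.strict_trans1[OF True ennreal_less_top] .
        define s where "s = enn2real (\<sigma> w)"
        have s: "\<sigma> w = ennreal s" "0 \<le> s" using lt by (auto simp: s_def ennreal_enn2real less_top)
        have "r T w = s" using True by (simp add: r_def stop_min_def s_def min_absorb1)
        then show ?thesis using s 3 by (simp add: ennreal_le_iff)
      next
        case False
        have "r T w = T" using False T0 by (simp add: r_def stop_min_def min_absorb2)
        moreover have "\<not> \<sigma> w \<le> ennreal a"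
        proof
          assume "\<sigma> w \<le> ennreal a"
          also have "ennreal a \<le> ennreal T" using 3 by (simp add: ennreal_leI)
          finally show False using False by simp
        qed
        ultimately show ?thesis using 3 by simp
      qed
      have "{w \<in> space (F a). \<sigma> w \<le> ennreal a} \<in> sets (F a)"
        using sigma_st 3 unfolding ext_stopping_time_def by simp
      moreover have "space (F a) = space (M x)" using subalg[OF 3(1)] spM by (simp add: subalgebra_def)
      moreover have "sets (F a) \<subseteq> sets (M x)" using subalg[OF 3(1)] setsM by (simp add: subalgebra_def)
      ultimately show ?thesis using eq by auto
    qed
  qed

  have Bf0: "0 \<le> Bf" using Bf[of x] by linarith
  define h where "h T \<omega> = integral {0..r T \<omega>} (\<lambda>s. f (X s \<omega>))" for T \<omega>
  define G where "G T \<omega> = g (X (r T \<omega>) \<omega>)" for T \<omega>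
  define R where "R T = (\<integral>\<omega>. r T \<omega> \<partial>M x)" for T
  define Z where "Z = (\<integral>\<^sup>+\<omega>. zeta_plus g X \<omega> \<partial>M x)"
  define z where "z = enn2real Z"
  have Zfin: "Z < \<infinity>" using C1 by (simp add: Z_def)
  have Zz: "Z = ennreal z" using Zfin by (simp add: z_def less_top)
  have z0: "0 \<le> z" by (simp add: z_def)
  have zetam[measurable]: "zeta_plus g X \<in> borel_measurable (M x)" using C1 by simp
  have h_meas[measurable]: "h T \<in> borel_measurable (M x)" if T: "T \<ge> 0" for T
    unfolding h_def by (rule path_int(1)[OF XmM rcM r_meas[OF T] f_cont Bf])
  have h_on: "(\<lambda>s. f (X s \<omega>)) integrable_on {0..r T \<omega>}" if T: "T \<ge> 0" and "\<omega> \<in> space (M x)" for T \<omega>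
    by (rule path_int(2)[OF XmM rcM r_meas[OF T] f_cont Bf that(2)])
  have h_bnd: "norm (h T \<omega>) \<le> Bf * T" if T: "T \<ge> 0" and \<omega>: "\<omega> \<in> space (M x)" for T \<omega>
  proof -
    have "norm (h T \<omega>) \<le> integral {0..r T \<omega>} (\<lambda>s. Bf)"
      unfolding h_def by (rule integral_norm_bound_integral[OF h_on[OF T \<omega>]]) (use Bf in auto)
    also have "\<dots> = r T \<omega> * Bf" using r_nn by simp
    also have "\<dots> \<le> T * Bf" using r_le[OF T] Bf0 by (simp add: mult_right_mono)
    finally show ?thesis by (simp add: mult.commute)
  qed
  have h_int: "integrable (M x) (h T)" if T: "T \<ge> 0" for T
    by (rule integrableI_bounded_set[where A="space (M x)" and B="Bf * T"]) (use h_bnd T in \<open>auto simp: P.emeasure_space_1\<close>)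
  have r_int: "integrable (M x) (r T)" if T: "T \<ge> 0" for T
    by (rule integrableI_bounded_set[where A="space (M x)" and B="T"]) (use r_le r_nn T in \<open>auto simp: P.emeasure_space_1\<close>)
  have G_meas[measurable]: "G T \<in> borel_measurable (M x)" if T: "T \<ge> 0" for T
  proof -
    have "(\<lambda>\<omega>. X (r T \<omega>) \<omega>) \<in> borel_measurable (M x)"
      by (rule rc_comp[OF XmM rcM r_meas[OF T] r_nn])
    from measurable_compose[OF this gm] show ?thesis by (simp add: G_def[abs_def])
  qed
  have G_int: "integrable (M x) (G T)" if T: "T > 0" for T
  proof -
    from B T obtain \<delta> where \<delta>: "\<delta> > 0" and lim: "(\<lambda>n. SUP z\<in>cball x \<delta>.
                   \<integral>\<^sup>+\<omega>. zetaT g X T \<omega> * indicator {\<omega>. zetaT g X T \<omega> > of_nat n} \<omega> \<partial>M z)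
              \<longlonglongrightarrow> 0" by blast
    from order_tendstoD(2)[OF lim, of 1] obtain n where n: "(SUP z\<in>cball x \<delta>.
                   \<integral>\<^sup>+\<omega>. zetaT g X T \<omega> * indicator {\<omega>. zetaT g X T \<omega> > of_nat n} \<omega> \<partial>M z) < 1"
      by (auto simp: eventually_sequentially)
    have xin: "x \<in> cball x \<delta>" using \<delta> by simp
    have tail: "(\<integral>\<^sup>+\<omega>. zetaT g X T \<omega> * indicator {\<omega>. zetaT g X T \<omega> > of_nat n} \<omega> \<partial>M x) < 1"
      by (rule le_less_trans[OF SUP_upper[OF xin] n])
    define \<phi> where "\<phi> \<omega> = ennreal (norm (G T \<omega>))" for \<omega>
    have GT[measurable]: "G T \<in> borel_measurable (M x)" using G_meas T by simp
    have [measurable]: "\<phi> \<in> borel_measurable (M x)" unfolding \<phi>_def by measurable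
    have "(\<integral>\<^sup>+\<omega>. \<phi> \<omega> \<partial>M x) = (\<integral>\<^sup>+\<omega>. \<phi> \<omega> * indicator {\<omega>. norm (G T \<omega>) \<le> real n} \<omega>
          + \<phi> \<omega> * indicator {\<omega>. norm (G T \<omega>) > real n} \<omega> \<partial>M x)"
      by (rule nn_integral_cong) (auto simp: indicator_def)
    also have "\<dots> = (\<integral>\<^sup>+\<omega>. \<phi> \<omega> * indicator {\<omega>. norm (G T \<omega>) \<le> real n} \<omega> \<partial>M x)
          + (\<integral>\<^sup>+\<omega>. \<phi> \<omega> * indicator {\<omega>. norm (G T \<omega>) > real n} \<omega> \<partial>M x)"
      using T by (intro nn_integral_add) measurable
    also have "\<dots> \<le> (\<integral>\<^sup>+\<omega>. ennreal (real n) \<partial>M x)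
          + (\<integral>\<^sup>+\<omega>. zetaT g X T \<omega> * indicator {\<omega>. zetaT g X T \<omega> > of_nat n} \<omega> \<partial>M x)"
    proof (intro add_mono nn_integral_mono)
      fix \<omega> show "\<phi> \<omega> * indicator {\<omega>. norm (G T \<omega>) \<le> real n} \<omega> \<le> ennreal (real n)"
        by (auto simp: \<phi>_def indicator_def ennreal_leI)
    next
      fix \<omega> 
      have le: "\<phi> \<omega> \<le> zetaT g X T \<omega>"
        unfolding \<phi>_def zetaT_def G_def real_norm_def
        by (rule SUP_upper) (use r_nn r_le T in \<open>auto\<close>)
      show "\<phi> \<omega> * indicator {\<omega>. norm (G T \<omega>) > real n} \<omega> \<le> zetaT g X T \<omega> * indicator {\<omega>. zetaT g X T \<omega> > of_nat n} \<omega>"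
      proof (cases "norm (G T \<omega>) > real n")
        case True
        have "ennreal (real n) < ennreal (norm (G T \<omega>))" using True
          by (intro ennreal_lessI) (auto intro: le_less_trans)
        then have "of_nat n < \<phi> \<omega>" unfolding \<phi>_def
          by (simp add: ennreal_of_nat_eq_real_of_nat)
        then have "of_nat n < zetaT g X T \<omega>" using le by (rule less_le_trans)
        then show ?thesis using True le by (simp add: indicator_def)
      qed (simp add: indicator_def)
    qed
    also have "\<dots> < \<infinity>" using less_trans[OF tail ennreal_one_less_top] by (simp add: P.emeasure_space_1 ennreal_mult_less_top)
    finally show ?thesis by (intro integrableI_bounded) (use T \<phi>_def in auto)
  qed
  have G_le: "(\<integral>\<omega>. G T \<omega> \<partial>M x) \<le> z" if T: "T > 0" for T
  proof -
    have "(\<integral>\<omega>. G T \<omega> \<partial>M x) \<le> (\<integral>\<omega>. max 0 (G T \<omega>) \<partial>M x)"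
      by (rule integral_mono[OF G_int[OF T]]) (use G_int[OF T] in auto)
    also have "\<dots> = enn2real (\<integral>\<^sup>+\<omega>. ennreal (max 0 (G T \<omega>)) \<partial>M x)"
      using T by (intro integral_eq_nn_integral) auto
    also have "\<dots> \<le> z" unfolding z_def Z_def
    proof (rule enn2real_mono[OF nn_integral_mono])
      fix \<omega> show "ennreal (max 0 (G T \<omega>)) \<le> zeta_plus g X \<omega>"
        unfolding zeta_plus_def G_def by (rule SUP_upper) (use r_nn in auto)
    qed (use Zfin Z_def in auto)
    finally show ?thesis .
  qed
  define Aseq where "Aseq T = (\<integral>\<omega>. h T \<omega> + G T \<omega> \<partial>M x)" for T
  define Bseq where "Bseq T = (\<integral>\<omega>. integral {0..r T \<omega>} (\<lambda>s. f (X s \<omega>) - d x) + 0 \<partial>M x)" for T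
  have rew: "reward M X f g x \<sigma> = Liminf at_top (\<lambda>T. ereal (Aseq T))"
    by (simp add: reward_def Aseq_def h_def G_def r_def)
  have gam: "Liminf at_top (\<lambda>T. ereal (Bseq T)) \<le> gamma_fn M F X f d x"
  proof -
    have "reward M X (\<lambda>y. f y - d x) (\<lambda>_. 0) x \<sigma> \<le> gamma_fn M F X f d x"
      unfolding gamma_fn_def value_fn_def by (rule SUP_upper) (simp add: sigma_st)
    moreover have "reward M X (\<lambda>y. f y - d x) (\<lambda>_. 0) x \<sigma> = Liminf at_top (\<lambda>T. ereal (Bseq T))"
      by (simp add: reward_def Bseq_def r_def)
    ultimately show ?thesis by simp
  qed
  have Beq: "Bseq T = (\<integral>\<omega>. h T \<omega> \<partial>M x) - d x * R T" if T: "T \<ge> 0" for T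
  proof -
    have "Bseq T = (\<integral>\<omega>. h T \<omega> - d x * r T \<omega> \<partial>M x)"
      unfolding Bseq_def
    proof (rule Bochner_Integration.integral_cong[OF refl])
      fix \<omega> assume \<omega>: "\<omega> \<in> space (M x)"
      have "integral {0..r T \<omega>} (\<lambda>s. f (X s \<omega>) - d x) = h T \<omega> - integral {0..r T \<omega>} (\<lambda>s. d x)"
        unfolding h_def by (rule integral_diff[OF h_on[OF T \<omega>] integrable_const_ivl])
      then show "integral {0..r T \<omega>} (\<lambda>s. f (X s \<omega>) - d x) + 0 = h T \<omega> - d x * r T \<omega>"
        using r_nn by (simp add: mult.commute)
    qed
    also have "\<dots> = (\<integral>\<omega>. h T \<omega> \<partial>M x) - d x * R T"
      unfolding R_def using h_int[OF T] r_int[OF T] by simp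
    finally show ?thesis .
  qed
  have R_mono: "R T0 \<le> R T" if "0 \<le> T0" "T0 \<le> T" for T0 T
    unfolding R_def by (rule integral_mono) (use that r_int r_mono in auto)
  have R_nn: "0 \<le> R T" for T unfolding R_def using r_nn by simp
  have key: "value_fn M F X f g x - ereal \<epsilon> \<le> gamma_fn M F X f d x + ereal (d x * R T0 + z)"
    if T0: "T0 > 0" for T0
  proof -
    have ev: "eventually (\<lambda>T. ereal (Aseq T) \<le> ereal (Bseq T) + ereal (d x * R T0 + z)) at_top"
      using eventually_ge_at_top[of T0]
    proof eventually_elim
      case (elim T)
      then have T: "T > 0" "T \<ge> 0" using T0 by auto
      have "Aseq T = (\<integral>\<omega>. h T \<omega> \<partial>M x) + (\<integral>\<omega>. G T \<omega> \<partial>M x)"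
        unfolding Aseq_def using h_int[OF T(2)] G_int[OF T(1)] by simp
      also have "\<dots> \<le> (\<integral>\<omega>. h T \<omega> \<partial>M x) + z" using G_le[OF T(1)] by simp
      also have "\<dots> = Bseq T + d x * R T + z" using Beq[OF T(2)] by simp
      also have "\<dots> \<le> Bseq T + d x * R T0 + z"
        using R_mono[of T0 T] elim T0 C3 by (simp add: mult_left_mono_neg)
      finally show ?case by simp
    qed
    have "value_fn M F X f g x - ereal \<epsilon> \<le> Liminf at_top (\<lambda>T. ereal (Aseq T))"
      using sigma_opt rew by simp
    also have "\<dots> \<le> Liminf at_top (\<lambda>T. ereal (Bseq T) + ereal (d x * R T0 + z))"
      by (rule Liminf_mono[OF ev])
    also have "\<dots> = Liminf at_top (\<lambda>T. ereal (Bseq T)) + ereal (d x * R T0 + z)"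
      by (rule Liminf_add_ereal_right) auto
    also have "\<dots> \<le> gamma_fn M F X f d x + ereal (d x * R T0 + z)"
      using gam by (rule add_right_mono)
    finally show ?thesis .
  qed
  have dneg: "d x < 0" and gfin: "gamma_fn M F X f d x < \<infinity>" using C3 by auto
  have Zeq: "enn2ereal Z = ereal z" using Zz z0 by simp
  have rpt: "ennreal (r T \<omega>) = min (\<sigma> \<omega>) (ennreal T)" for T \<omega>
  proof -
    have "min (\<sigma> \<omega>) (ennreal T) < top"
      using order.strict_trans1[OF min.cobounded2 ennreal_less_top] .
    then show ?thesis unfolding r_def stop_min_def by (rule ennreal_enn2real)
  qed
  have sup_pt: "(SUP n. ennreal (r (real (Suc n)) \<omega>)) = \<sigma> \<omega>" for \<omega>
  proof (rule antisym)
    show "(SUP n. ennreal (r (real (Suc n)) \<omega>)) \<le> \<sigma> \<omega>"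
      by (rule SUP_least) (simp add: rpt)
  next
    show "\<sigma> \<omega> \<le> (SUP n. ennreal (r (real (Suc n)) \<omega>))"
    proof (cases "\<sigma> \<omega> = top")
      case True
      have "top = (SUP n. (of_nat n :: ennreal))" by (simp add: ennreal_SUP_of_nat_eq_top)
      also have "\<dots> \<le> (SUP n. ennreal (r (real (Suc n)) \<omega>))"
      proof (rule SUP_mono)
        fix n show "\<exists>m\<in>UNIV. (of_nat n :: ennreal) \<le> ennreal (r (real (Suc m)) \<omega>)"
          by (rule bexI[of _ n]) (simp_all add: rpt True ennreal_of_nat_eq_real_of_nat ennreal_leI)
      qed
      finally show ?thesis using True by simp
    next
      case False
      then obtain s where s: "\<sigma> \<omega> = ennreal s" "0 \<le> s" by (metis ennreal_cases)
      obtain n where n: "s \<le> real n" using real_arch_simple by blast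
      have le: "\<sigma> \<omega> \<le> ennreal (real (Suc n))" unfolding s(1) by (rule ennreal_leI) (use n in simp)
      have "\<sigma> \<omega> = ennreal (r (real (Suc n)) \<omega>)" unfolding rpt by (rule min_absorb1[OF le, symmetric])
      then show ?thesis by (metis UNIV_I SUP_upper)
    qed
  qed
  have sig: "(\<integral>\<^sup>+\<omega>. \<sigma> \<omega> \<partial>M x) = (SUP n. ennreal (R (real (Suc n))))"
  proof -
    have "(\<integral>\<^sup>+\<omega>. \<sigma> \<omega> \<partial>M x) = (\<integral>\<^sup>+\<omega>. (SUP n. ennreal (r (real (Suc n)) \<omega>)) \<partial>M x)"
      by (simp only: sup_pt)
    also have "\<dots> = (SUP n. \<integral>\<^sup>+\<omega>. ennreal (r (real (Suc n)) \<omega>) \<partial>M x)"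
    proof (rule nn_integral_monotone_convergence_SUP)
      show "incseq (\<lambda>n \<omega>. ennreal (r (real (Suc n)) \<omega>))"
        by (auto simp: incseq_def le_fun_def intro!: ennreal_leI r_mono)
      fix n show "(\<lambda>\<omega>. ennreal (r (real (Suc n)) \<omega>)) \<in> borel_measurable (M x)"
        using r_meas[of "real (Suc n)"] by simp
    qed
    also have "\<dots> = (SUP n. ennreal (R (real (Suc n))))"
      unfolding R_def by (subst nn_integral_eq_integral[OF r_int]) (auto simp: r_nn)
    finally show ?thesis .
  qed
  show ?thesis
  proof (cases "value_fn M F X f g x" rule: ereal_cases)
    case (real wv)
    have k1: "ereal wv - ereal \<epsilon> \<le> gamma_fn M F X f d x + ereal (d x * R 1 + z)"
      using key[of 1] real by simp
    then have "gamma_fn M F X f d x \<noteq> - \<infinity>" by auto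
    with gfin obtain gv where gv: "gamma_fn M F X f d x = ereal gv" by (cases "gamma_fn M F X f d x") auto
    define Kr where "Kr = (gv + z - wv + \<epsilon>) / (- d x)"
    have RK: "R T0 \<le> Kr" if "T0 > 0" for T0
    proof -
      have "wv - \<epsilon> \<le> gv + (d x * R T0 + z)" using key[OF that] real gv by simp
      then have h1: "R T0 * (- d x) \<le> gv + z - wv + \<epsilon>" by (simp add: algebra_simps)
      have dpos: "0 < - d x" using dneg by simp
      show ?thesis unfolding Kr_def by (subst pos_le_divide_eq[OF dpos]) (rule h1)
    qed
    have Kr0: "0 \<le> Kr" using RK[of 1] R_nn[of 1] by simp
    have "(\<integral>\<^sup>+\<omega>. \<sigma> \<omega> \<partial>M x) \<le> ennreal Kr"
      unfolding sig by (rule SUP_least) (use RK in \<open>auto intro: ennreal_leI\<close>)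
    then have "enn2ereal (\<integral>\<^sup>+\<omega>. \<sigma> \<omega> \<partial>M x) \<le> enn2ereal (ennreal Kr)"
      by (simp add: less_eq_ennreal.rep_eq)
    also have "\<dots> = ereal Kr" using Kr0 by simp
    also have "\<dots> = (gamma_fn M F X f d x + enn2ereal Z - value_fn M F X f g x + ereal \<epsilon>) / ereal (- d x)"
      using dneg by (simp add: gv Zeq real Kr_def)
    finally show ?thesis unfolding Z_def .
  next
    case PInf
    have "ereal (d x * R 1 + z) \<noteq> \<infinity>" by simp
    have "\<infinity> \<le> gamma_fn M F X f d x + ereal (d x * R 1 + z)"
      using key[of 1] PInf by simp
    then have "gamma_fn M F X f d x = \<infinity>" by (cases "gamma_fn M F X f d x") auto
    with gfin show ?thesis by simp
  next
    case MInf
    have "gamma_fn M F X f d x + enn2ereal Z - value_fn M F X f g x + ereal \<epsilon> = \<infinity>"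
      using MInf Zeq by (cases "gamma_fn M F X f d x") (auto simp: minus_ereal_def)
    then have "(gamma_fn M F X f d x + enn2ereal Z - value_fn M F X f g x + ereal \<epsilon>) / ereal (- d x) = \<infinity>"
      using dneg by (simp add: divide_ereal_def)
    then show ?thesis unfolding Z_def by simp
  qed
qed
end
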